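(* Let $R$ be a ring with local units. If there is a trace $t$ on $R$ (with values in some ring) which is injective on the set of idempotents of $R$, then $R$ is directly finite. If $R$ is a $*$-ring with local units and there is a trace on $R$ which is injective on the set of projections (self-adjoint idempotents) of $R$, then $R$ is finite. In particular, a $*$-ring with local units admitting a faithful trace with values in a $*$-ring is finite.
   Context: Rings are associative, not necessarily unital. A ring $R$ has local units if for every finite subset $\{x_1,\dots,x_n\}\subseteq R$ there is an idempotent $u\in R$ with $x_iu=ux_i=x_i$ for all $i$. A ring with local units is directly finite if for all $x,y\in R$ and every idempotent $u$ with $xu=ux=x$ and $yu=uy=y$, $xy=u$ implies $yx=u$. A $*$-ring (ring with involution $x\mapsto x^*$: additive, $(xy)^*=y^*x^*$, $x^{**}=x$) with local units is finite if for all $x\in R$ and every idempotent $u$ with $xu=ux=x$, $xx^*=u$ implies $x^*x=u$. A trace is an additive map $t$ with $t(xy)=t(yx)$. In a $*$-ring, $x\ge0$ means $x$ is a finite sum of elements $zz^*$, and $x>0$ means $x\ge0$, $x\ne0$; a trace between $*$-rings is faithful if $x\ge0\Rightarrow t(x)\ge0$ and $x>0\Rightarrow t(x)>0$. *)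

theory Defs
  imports Main
begin

text \<open>Rings are associative, not necessarily unital: Isabelle's type class ring
  (semiring + ab_group_add) has no unit. The ring R is the type 'a.\<close>

definition is_idempotent :: "'a::ring \<Rightarrow> bool" where
  "is_idempotent u \<longleftrightarrow> u * u = u"

definition has_local_units :: "'a::ring itself \<Rightarrow> bool" where
  "has_local_units _ \<longleftrightarrow>
     (\<forall>F::'a set. finite F \<longrightarrow>
        (\<exists>u. is_idempotent u \<and> (\<forall>x\<in>F. x * u = x \<and> u * x = x)))"

definition directly_finite :: "'a::ring itself \<Rightarrow> bool" where
  "directly_finite _ \<longleftrightarrow>
     (\<forall>(x::'a) y u. is_idempotent u \<and> x * u = x \<and> u * x = x \<and> y * u = y \<and> u * y = y
        \<and> x * y = u \<longrightarrow> y * x = u)"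

definition is_involution :: "('a::ring \<Rightarrow> 'a) \<Rightarrow> bool" where
  "is_involution st \<longleftrightarrow>
     (\<forall>x y. st (x + y) = st x + st y) \<and>
     (\<forall>x y. st (x * y) = st y * st x) \<and>
     (\<forall>x. st (st x) = x)"

definition star_finite :: "('a::ring \<Rightarrow> 'a) \<Rightarrow> bool" where
  "star_finite st \<longleftrightarrow>
     (\<forall>x u. is_idempotent u \<and> x * u = x \<and> u * x = x \<and> x * st x = u \<longrightarrow> st x * x = u)"

definition is_trace :: "('a::ring \<Rightarrow> 'b::ring) \<Rightarrow> bool" where
  "is_trace t \<longleftrightarrow> (\<forall>x y. t (x + y) = t x + t y) \<and> (\<forall>x y. t (x * y) = t (y * x))"

definition projections :: "('a::ring \<Rightarrow> 'a) \<Rightarrow> 'a set" where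
  "projections st = {p. is_idempotent p \<and> st p = p}"

definition star_nonneg :: "('a::ring \<Rightarrow> 'a) \<Rightarrow> 'a \<Rightarrow> bool" where
  "star_nonneg st x \<longleftrightarrow> (\<exists>n::nat. \<exists>z. x = (\<Sum>i<n. z i * st (z i)))"

definition star_pos :: "('a::ring \<Rightarrow> 'a) \<Rightarrow> 'a \<Rightarrow> bool" where
  "star_pos st x \<longleftrightarrow> star_nonneg st x \<and> x \<noteq> 0"

definition faithful_trace ::
  "('a::ring \<Rightarrow> 'a) \<Rightarrow> ('b::ring \<Rightarrow> 'b) \<Rightarrow> ('a \<Rightarrow> 'b) \<Rightarrow> bool" where
  "faithful_trace stR stS t \<longleftrightarrow> is_trace t \<and>
     (\<forall>x. star_nonneg stR x \<longrightarrow> star_nonneg stS (t x)) \<and>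
     (\<forall>x. star_pos stR x \<longrightarrow> star_pos stS (t x))"

end

theory Submission
  imports Defs
begin

lemma add_hom_diff:
  assumes "\<forall>x y. f (x + y) = f x + f y"
  shows "f (a - b) = f a - (f (b::'a::ab_group_add) :: 'b::ab_group_add)"
proof -
  have "f ((a - b) + b) = f (a - b) + f b" using assms by blast
  then have "f a = f (a - b) + f b" by simp
  then show ?thesis by (simp add: algebra_simps)
qed

lemma part1:
  fixes t :: "'a::ring \<Rightarrow> 'b::ring"
  assumes "is_trace t" "inj_on t {e. is_idempotent e}"
  shows "directly_finite TYPE('a)"
  unfolding directly_finite_def
proof (intro allI impI)
  fix x y u :: 'a
  assume h: "is_idempotent u \<and> x * u = x \<and> u * x = x \<and> y * u = y \<and> u * y = y \<and> x * y = u"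
  have "y * x * (y * x) = y * (x * y) * x" by (simp add: mult.assoc)
  also have "\<dots> = y * x" using h by (simp add: mult.assoc)
  finally have i: "is_idempotent (y * x)" by (simp add: is_idempotent_def)
  have "t (y * x) = t u" using assms(1) h unfolding is_trace_def by metis
  then show "y * x = u" using assms(2) i h unfolding inj_on_def by blast
qed

lemma part2:
  fixes t :: "'a::ring \<Rightarrow> 'c::ring"
  assumes inv: "is_involution st" and "is_trace t" "inj_on t (projections st)"
  shows "star_finite st"
  unfolding star_finite_def
proof (intro allI impI)
  fix x u :: 'a
  assume h: "is_idempotent u \<and> x * u = x \<and> u * x = x \<and> x * st x = u"
  have sm: "\<And>a b. st (a * b) = st b * st a" and ss: "\<And>a. st (st a) = a"
    using inv unfolding is_involution_def by auto
  have su: "st u = u" using h sm ss by metis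
  have "st x * x * (st x * x) = st x * (x * st x) * x" by (simp add: mult.assoc)
  also have "\<dots> = st x * x" using h by (simp add: mult.assoc)
  finally have i: "is_idempotent (st x * x)" by (simp add: is_idempotent_def)
  have s2: "st (st x * x) = st x * x" using sm ss by metis
  have "t (st x * x) = t u" using assms(2) h unfolding is_trace_def by metis
  then show "st x * x = u" using assms(3) i s2 su h unfolding inj_on_def projections_def by blast
qed

lemma part3:
  fixes t :: "'a::ring \<Rightarrow> 'd::ring"
  assumes inv: "is_involution st" and ft: "faithful_trace st stS t"
  shows "star_finite st"
  unfolding star_finite_def
proof (intro allI impI)
  fix x u :: 'a
  assume h: "is_idempotent u \<and> x * u = x \<and> u * x = x \<and> x * st x = u"
  have sm: "\<And>a b. st (a * b) = st b * st a" and ss: "\<And>a. st (st a) = a"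
    and sa: "\<forall>a b. st (a + b) = st a + st b"
    using inv unfolding is_involution_def by auto
  have tr: "is_trace t" using ft unfolding faithful_trace_def by auto
  have ta: "\<forall>a b. t (a + b) = t a + t b" using tr unfolding is_trace_def by auto
  have su: "st u = u" using h sm ss by metis
  have ux: "u * st x = st x" using h sm su by metis
  define e where "e = st x * x"
  have ue: "u * e = e" unfolding e_def using ux by (simp add: mult.assoc[symmetric])
  have eu: "e * u = e" unfolding e_def using h by (simp add: mult.assoc)
  have ee: "e * e = e"
  proof -
    have "e * e = st x * (x * st x) * x" unfolding e_def by (simp add: mult.assoc)
    then show ?thesis using h unfolding e_def by (simp add: mult.assoc)
  qed
  have se: "st e = e" unfolding e_def using sm ss by metis
  have uu: "u * u = u" using h by (simp add: is_idempotent_def)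
  define f where "f = u - e"
  have sf: "st f = f" unfolding f_def using add_hom_diff[OF sa] su se by simp
  have ff: "f * f = f" unfolding f_def using ue eu ee uu by (simp add: algebra_simps)
  have tf: "t f = 0"
  proof -
    have "t e = t u" unfolding e_def using tr h unfolding is_trace_def by metis
    then show ?thesis unfolding f_def using add_hom_diff[OF ta] by simp
  qed
  have nn: "star_nonneg st f"
    unfolding star_nonneg_def
    by (rule exI[of _ 1], rule exI[of _ "\<lambda>_. f"]) (simp add: sf ff)
  have "f = 0"
  proof (rule ccontr)
    assume "f \<noteq> 0"
    then have "star_pos st f" using nn by (simp add: star_pos_def)
    then have "star_pos stS (t f)" using ft unfolding faithful_trace_def by blast
    then show False using tf by (simp add: star_pos_def)
  qed
  then show "st x * x = u" unfolding f_def e_def by simp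
qed

theorem proposition4p2:
  shows
  "(\<forall>t :: 'a::ring \<Rightarrow> 'b::ring.
      has_local_units TYPE('a) \<and> is_trace t \<and> inj_on t {e. is_idempotent e}
      \<longrightarrow> directly_finite TYPE('a))
   \<and>
   (\<forall>(st :: 'a \<Rightarrow> 'a) (t :: 'a \<Rightarrow> 'c::ring).
      has_local_units TYPE('a) \<and> is_involution st \<and> is_trace t \<and> inj_on t (projections st)
      \<longrightarrow> star_finite st)
   \<and>
   (\<forall>(st :: 'a \<Rightarrow> 'a) (stS :: 'd::ring \<Rightarrow> 'd) (t :: 'a \<Rightarrow> 'd).
      has_local_units TYPE('a) \<and> is_involution st \<and> is_involution stS \<and> faithful_trace st stS t
      \<longrightarrow> star_finite st)"
  using part1 part2 part3 by blast

end
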